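(* Assume Assumption 1 and Assumption 2 with $\delta>1/10$. Conditioned on $S_L$ and $S_R$, for any node $u\in L$, the local clustering coefficient of $u$ in the projected graph satisfies, as $n_L,n_R\to\infty$, $$C(u)=\frac{1}{1+\frac{M_{R2}^2}{M_{R3}M_{R1}}\,w_u}+o(1).$$
   Context: Model: left nodes $L$ ($|L|=n_L$), right nodes $R$ ($|R|=n_R$), weight sequences $S_L=(w_u)_{u\in L}$, $S_R=(w_v)_{v\in R}$ of positive reals; $M_{Lk}=\frac1{n_L}\sum_{u\in L}w_u^k$, $M_{Rk}=\frac1{n_R}\sum_{v\in R}w_v^k$. The random bipartite graph $G_b=(L\sqcup R,E_b)$ contains each edge $(u,v)$, $u\in L$, $v\in R$, independently with probability $\min\left(\frac{w_uw_v}{n_RM_{R1}},1\right)$. The projected graph is $G=(L,E)$ with $(u,u')\in E$ for distinct $u,u'\in L$ iff there is $z\in R$ with $(u,z),(u',z)\in E_b$. Local clustering coefficient (conditional-probability version): $C(u)=\Pr[(v,w)\in E\mid (u,v)\in E,(u,w)\in E]$, where $v,w$ are distinct nodes of $L\setminus\{u\}$ forming a random wedge centered at $u$ (i.e. $v,w$ chosen uniformly at random, independently of the graph, and conditioned on both edges $(u,v),(u,w)$ being present), all probabilities conditional on $S_L,S_R$. Assumption 1: $\frac{w_uw_v}{n_RM_{R1}}\le1$ for all $u\in L,v\in R$. Assumption 2 (parameter $\delta>0$), as $n_L,n_R\to\infty$: $\max(S_L\cup S_R)=O(n_R^{1/2-\delta})$, $\min S_L=\Omega(1)$, $M_{R2}=O(M_{R1}^2)$,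 $M_{R4}=O(n_R^{1-2\delta})$. *)

theory Defs
  imports "HOL-Probability.Probability" "HOL-Library.Landau_Symbols"
begin

definition moment :: "nat \<Rightarrow> (nat \<Rightarrow> real) \<Rightarrow> nat \<Rightarrow> real" where
  "moment n w k = (1 / real n) * (\<Sum>u<n. w u ^ k)"

definition edge_prob :: "nat \<Rightarrow> (nat \<Rightarrow> real) \<Rightarrow> (nat \<Rightarrow> real) \<Rightarrow> nat \<Rightarrow> nat \<Rightarrow> real" where
  "edge_prob nR wL wR u v = min (wL u * wR v / (real nR * moment nR wR 1)) 1"

definition bip_graph :: "nat \<Rightarrow> nat \<Rightarrow> (nat \<Rightarrow> real) \<Rightarrow> (nat \<Rightarrow> real) \<Rightarrow> (nat \<times> nat) set pmf" where
  "bip_graph nL nR wL wR =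
     map_pmf (\<lambda>f. {e. f e})
       (Pi_pmf ({..<nL} \<times> {..<nR}) False
          (\<lambda>(u, v). bernoulli_pmf (edge_prob nR wL wR u v)))"

definition proj_edge :: "nat \<Rightarrow> (nat \<times> nat) set \<Rightarrow> nat \<Rightarrow> nat \<Rightarrow> bool" where
  "proj_edge nR Eb u u' \<longleftrightarrow> u \<noteq> u' \<and> (\<exists>z<nR. (u, z) \<in> Eb \<and> (u', z) \<in> Eb)"

definition wedges :: "nat \<Rightarrow> nat \<Rightarrow> (nat \<times> nat) set" where
  "wedges nL u = {(v, w). v < nL \<and> w < nL \<and> v \<noteq> u \<and> w \<noteq> u \<and> v \<noteq> w}"

definition wedge_graph :: "nat \<Rightarrow> nat \<Rightarrow> (nat \<Rightarrow> real) \<Rightarrow> (nat \<Rightarrow> real) \<Rightarrow> nat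
    \<Rightarrow> ((nat \<times> nat) \<times> (nat \<times> nat) set) pmf" where
  "wedge_graph nL nR wL wR u = pair_pmf (pmf_of_set (wedges nL u)) (bip_graph nL nR wL wR)"

definition clust :: "nat \<Rightarrow> nat \<Rightarrow> (nat \<Rightarrow> real) \<Rightarrow> (nat \<Rightarrow> real) \<Rightarrow> nat \<Rightarrow> real" where
  "clust nL nR wL wR u =
     (let P = measure_pmf.prob (wedge_graph nL nR wL wR u);
          B = {((v, w), Eb). proj_edge nR Eb u v \<and> proj_edge nR Eb u w};
          A = {((v, w), Eb). proj_edge nR Eb v w}
      in P (A \<inter> B) / P B)"

end

theory Submission
  imports Defs
begin


lemma prob_pair_times:
  "measure_pmf.prob (pair_pmf A B) (S \<times> T) = measure_pmf.prob A S * measure_pmf.prob B T"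
proof -
  have "measure_pmf.prob (pair_pmf A B) (S \<times> T) = measure_pmf.prob (pair_pmf A B) ((S \<times> T) \<inter> set_pmf (pair_pmf A B))"
    by (rule measure_Int_set_pmf[symmetric])
  also have "(S \<times> T) \<inter> set_pmf (pair_pmf A B) = (S \<inter> set_pmf A) \<times> (T \<inter> set_pmf B)" by auto
  also have "measure_pmf.prob (pair_pmf A B) \<dots> = measure_pmf.prob A (S \<inter> set_pmf A) * measure_pmf.prob B (T \<inter> set_pmf B)"
    by (rule measure_pmf_prob_product) (auto intro: countable_subset[OF _ countable_set_pmf])
  finally show ?thesis by (simp add: measure_Int_set_pmf)
qed

lemma col_indep:
  fixes p :: "('x \<times> 'z) \<Rightarrow> bool pmf" and P :: "'z \<Rightarrow> ('x \<Rightarrow> bool) \<Rightarrow> bool"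
  assumes X: "finite X" and Z: "finite Z"
  shows "measure_pmf.prob (Pi_pmf (X \<times> Z) False p) {f. \<forall>z\<in>Z. P z (\<lambda>x. x \<in> X \<and> f (x, z))}
       = (\<Prod>z\<in>Z. measure_pmf.prob (Pi_pmf (X \<times> {z}) False p) {f. P z (\<lambda>x. x \<in> X \<and> f (x, z))})"
  using Z
proof (induction rule: finite_induct)
  case empty
  then show ?case by simp
next
  case (insert z Z0)
  let ?A = "X \<times> {z}" and ?B = "X \<times> Z0"
  have eq: "X \<times> insert z Z0 = ?A \<union> ?B" by auto
  have dis: "?A \<inter> ?B = {}" using insert by auto
  let ?h = "\<lambda>(f,g) x. if x \<in> ?A then f x else g x"
  have "Pi_pmf (X \<times> insert z Z0) False p = map_pmf ?h (pair_pmf (Pi_pmf ?A False p) (Pi_pmf ?B False p))"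
    unfolding eq by (rule Pi_pmf_union) (use X insert dis in auto)
  hence "measure_pmf.prob (Pi_pmf (X \<times> insert z Z0) False p) {f. \<forall>z'\<in>insert z Z0. P z' (\<lambda>x. x \<in> X \<and> f (x, z'))}
     = measure_pmf.prob (pair_pmf (Pi_pmf ?A False p) (Pi_pmf ?B False p))
         (?h -` {f. \<forall>z'\<in>insert z Z0. P z' (\<lambda>x. x \<in> X \<and> f (x, z'))})" by simp
  also have "?h -` {f. \<forall>z'\<in>insert z Z0. P z' (\<lambda>x. x \<in> X \<and> f (x, z'))}
     = {f. P z (\<lambda>x. x \<in> X \<and> f (x, z))} \<times> {g. \<forall>z'\<in>Z0. P z' (\<lambda>x. x \<in> X \<and> g (x, z'))}"
  proof -
    have a: "(\<lambda>x. x \<in> X \<and> (if (x, z) \<in> ?A then f (x, z) else g (x, z))) = (\<lambda>x. x \<in> X \<and> f (x,z))" for f g :: "'x \<times> 'z \<Rightarrow> bool"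
      by auto
    have b: "z' \<in> Z0 \<Longrightarrow> (\<lambda>x. x \<in> X \<and> (if (x, z') \<in> ?A then f (x, z') else g (x, z'))) = (\<lambda>x. x \<in> X \<and> g (x,z'))" for f g :: "'x \<times> 'z \<Rightarrow> bool" and z'
      using insert by auto
    show ?thesis using a b by (auto simp: case_prod_unfold)
  qed
  also have "measure_pmf.prob (pair_pmf (Pi_pmf ?A False p) (Pi_pmf ?B False p)) \<dots>
     = measure_pmf.prob (Pi_pmf ?A False p) {f. P z (\<lambda>x. x \<in> X \<and> f (x, z))} * measure_pmf.prob (Pi_pmf ?B False p) {g. \<forall>z'\<in>Z0. P z' (\<lambda>x. x \<in> X \<and> g (x, z'))}"
    by (rule prob_pair_times)
  finally show ?case using insert by simp
qed

lemma rect_prob: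
  fixes q :: "'a \<Rightarrow> real"
  assumes I: "finite I" and S: "S \<subseteq> I" and q: "\<And>e. e \<in> I \<Longrightarrow> 0 \<le> q e \<and> q e \<le> 1"
  shows "measure_pmf.prob (Pi_pmf I False (\<lambda>e. bernoulli_pmf (q e))) {f. \<forall>e\<in>S. f e} = (\<Prod>e\<in>S. q e)"
proof -
  have "{f. \<forall>e\<in>S. f e} = Pi I (\<lambda>e. if e \<in> S then {True} else UNIV)" using S by (auto simp: Pi_def)
  hence "measure_pmf.prob (Pi_pmf I False (\<lambda>e. bernoulli_pmf (q e))) {f. \<forall>e\<in>S. f e}
     = (\<Prod>e\<in>I. measure_pmf.prob (bernoulli_pmf (q e)) (if e \<in> S then {True} else UNIV))"
    by (simp add: measure_Pi_pmf_Pi I)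
  also have "\<dots> = (\<Prod>e\<in>I. if e \<in> S then q e else 1)"
    by (intro prod.cong refl) (use q in \<open>auto simp: measure_pmf_single\<close>)
  also have "\<dots> = (\<Prod>e\<in>S. q e)" using S I by (simp add: prod.If_cases Int_absorb1)
  finally show ?thesis .
qed




lemma prod_ge_1_minus_sum:
  fixes y :: "'a \<Rightarrow> real"
  assumes "finite A" "\<And>i. i \<in> A \<Longrightarrow> 0 \<le> y i \<and> y i \<le> 1"
  shows "1 - (\<Sum>i\<in>A. y i) \<le> (\<Prod>i\<in>A. 1 - y i)"
  using assms
proof (induction rule: finite_induct)
  case (insert a A)
  have IH: "1 - (\<Sum>i\<in>A. y i) \<le> (\<Prod>i\<in>A. 1 - y i)" using insert by auto
  have p0: "0 \<le> (\<Prod>i\<in>A. 1 - y i)" "(\<Prod>i\<in>A. 1 - y i) \<le> 1"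
    using insert by (auto intro!: prod_nonneg prod_le_1)
  have ya: "0 \<le> y a" "y a \<le> 1" using insert by auto
  have s0: "0 \<le> (\<Sum>i\<in>A. y i)" using insert by (auto intro!: sum_nonneg)
  have "1 - (y a + (\<Sum>i\<in>A. y i)) \<le> (1 - y a) * (1 - (\<Sum>i\<in>A. y i))"
    using ya s0 by (simp add: algebra_simps)
  also have "\<dots> \<le> (1 - y a) * (\<Prod>i\<in>A. 1 - y i)"
    using IH ya by (intro mult_left_mono) auto
  finally show ?case using insert by simp
qed simp

lemma prod_le_bonf2:
  fixes y :: "'a \<Rightarrow> real"
  assumes "finite A" "\<And>i. i \<in> A \<Longrightarrow> 0 \<le> y i \<and> y i \<le> 1"
  shows "(\<Prod>i\<in>A. 1 - y i) \<le> 1 - (\<Sum>i\<in>A. y i) + (\<Sum>i\<in>A. y i)^2 / 2"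
  using assms
proof (induction rule: finite_induct)
  case (insert a A)
  define s where "s = (\<Sum>i\<in>A. y i)"
  have IH: "(\<Prod>i\<in>A. 1 - y i) \<le> 1 - s + s^2/2" using insert by (auto simp: s_def)
  have ya: "0 \<le> y a" "y a \<le> 1" using insert by auto
  have s0: "0 \<le> s" using insert by (auto intro!: sum_nonneg simp: s_def)
  have "(1 - y a) * (\<Prod>i\<in>A. 1 - y i) \<le> (1 - y a) * (1 - s + s^2/2)"
    using IH ya by (intro mult_left_mono) auto
  also have "\<dots> \<le> 1 - (y a + s) + (y a + s)^2/2"
    using ya s0 by (simp add: algebra_simps power2_eq_square)
  finally show ?case using insert by (simp add: s_def)
qed simp

lemma prod_diff_le:
  fixes x y :: "'a \<Rightarrow> real"
  assumes "finite A" "\<And>i. i \<in> A \<Longrightarrow> 0 \<le> x i \<and> x i \<le> y i \<and> y i \<le> 1"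
  shows "(\<Prod>i\<in>A. y i) - (\<Prod>i\<in>A. x i) \<le> (\<Sum>i\<in>A. y i - x i)"
  using assms
proof (induction rule: finite_induct)
  case (insert a A)
  have IH: "(\<Prod>i\<in>A. y i) - (\<Prod>i\<in>A. x i) \<le> (\<Sum>i\<in>A. y i - x i)" using insert by auto
  have xy: "\<And>i. i \<in> A \<Longrightarrow> 0 \<le> x i \<and> x i \<le> 1 \<and> 0 \<le> y i \<and> y i \<le> 1" using insert.prems by force
  have px: "0 \<le> (\<Prod>i\<in>A. x i)" "(\<Prod>i\<in>A. x i) \<le> 1" using xy by (auto intro!: prod_nonneg prod_le_1)
  have py: "0 \<le> (\<Prod>i\<in>A. y i)" "(\<Prod>i\<in>A. y i) \<le> 1" using xy by (auto intro!: prod_nonneg prod_le_1)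
  have a: "0 \<le> x a" "x a \<le> y a" "y a \<le> 1" using insert by auto
  have "y a * (\<Prod>i\<in>A. y i) - x a * (\<Prod>i\<in>A. x i)
      = y a * ((\<Prod>i\<in>A. y i) - (\<Prod>i\<in>A. x i)) + (y a - x a) * (\<Prod>i\<in>A. x i)" by (simp add: algebra_simps)
  also have "\<dots> \<le> 1 * (\<Sum>i\<in>A. y i - x i) + (y a - x a) * 1"
  proof (rule add_mono)
    have S0: "0 \<le> (\<Sum>i\<in>A. y i - x i)" using insert by (auto intro!: sum_nonneg)
    show "y a * ((\<Prod>i\<in>A. y i) - (\<Prod>i\<in>A. x i)) \<le> 1 * (\<Sum>i\<in>A. y i - x i)"
    proof (rule mult_mono)
      show "0 \<le> (\<Prod>i\<in>A. y i) - (\<Prod>i\<in>A. x i)"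
        using insert.prems by (simp, intro prod_mono) force
    qed (use IH a S0 in auto)
    show "(y a - x a) * (\<Prod>i\<in>A. x i) \<le> (y a - x a) * 1" using a px by (intro mult_left_mono) auto
  qed
  finally show ?case using insert by simp
qed simp

lemma prod_diff_ge:
  fixes x y :: "'a \<Rightarrow> real"
  assumes "finite A" "\<And>i. i \<in> A \<Longrightarrow> 0 \<le> x i \<and> x i \<le> y i \<and> y i \<le> 1"
  shows "(\<Sum>i\<in>A. y i - x i) * (\<Prod>i\<in>A. x i) \<le> (\<Prod>i\<in>A. y i) - (\<Prod>i\<in>A. x i)"
  using assms
proof (induction rule: finite_induct)
  case (insert a A)
  define S where "S = (\<Sum>i\<in>A. y i - x i)"
  define P where "P = (\<Prod>i\<in>A. x i)"
  define Q where "Q = (\<Prod>i\<in>A. y i)"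
  have IH: "S * P \<le> Q - P" using insert by (auto simp: S_def P_def Q_def)
  have xy: "\<And>i. i \<in> A \<Longrightarrow> 0 \<le> x i \<and> x i \<le> 1" using insert.prems by force
  have px: "0 \<le> P" "P \<le> 1" using xy by (auto intro!: prod_nonneg prod_le_1 simp: P_def)
  have S0: "0 \<le> S" using insert by (auto intro!: sum_nonneg simp: S_def)
  have a: "0 \<le> x a" "x a \<le> y a" "y a \<le> 1" using insert by auto
  have "(y a - x a + S) * (x a * P) = x a * (S * P) + (y a - x a) * x a * P" by (simp add: algebra_simps)
  also have "\<dots> \<le> y a * (Q - P) + (y a - x a) * P"
  proof (rule add_mono)
    show "x a * (S * P) \<le> y a * (Q - P)" using IH a S0 px by (meson mult_mono order.trans mult_nonneg_nonneg)
    have "(y a - x a) * x a * P \<le> (y a - x a) * 1 * P"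
      using a px by (intro mult_right_mono mult_left_mono) auto
    then show "(y a - x a) * x a * P \<le> (y a - x a) * P" by simp
  qed
  also have "\<dots> = y a * Q - x a * P" by (simp add: algebra_simps)
  finally show ?case using insert by (simp add: S_def P_def Q_def)
qed simp




lemma pmf_prob_compl: "measure_pmf.prob M {x. \<not> P x} = 1 - measure_pmf.prob M {x. P x}"
proof -
  have "measure_pmf.prob M (space (measure_pmf M) - {x. P x}) = 1 - measure_pmf.prob M {x. P x}"
    by (rule measure_pmf.prob_compl) simp
  moreover have "space (measure_pmf M) - {x. P x} = {x. \<not> P x}" by auto
  ultimately show ?thesis by simp
qed

lemma pmf_prob_compl_set: "measure_pmf.prob M (- U) = 1 - measure_pmf.prob M U"
  using pmf_prob_compl[of M "\<lambda>x. x \<in> U"] by (simp add: Compl_eq)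

lemma pmf_prob_union: "measure_pmf.prob M (A \<union> B) = measure_pmf.prob M A + measure_pmf.prob M B - measure_pmf.prob M (A \<inter> B)"
  by (simp add: measure_pmf.finite_measure_Union' measure_pmf.finite_measure_Diff' Int_commute)

lemma col_rect:
  fixes qq :: "'x \<times> 'z \<Rightarrow> real"
  assumes X: "finite X" and S: "S \<subseteq> X" and q: "\<And>e. e \<in> X \<times> {z} \<Longrightarrow> 0 \<le> qq e \<and> qq e \<le> 1"
  shows "measure_pmf.prob (Pi_pmf (X \<times> {z}) False (\<lambda>e. bernoulli_pmf (qq e))) {f. \<forall>x\<in>S. f (x, z)} = (\<Prod>x\<in>S. qq (x, z))"
proof -
  have "{f. \<forall>x\<in>S. f (x, z)} = {f. \<forall>e\<in>S \<times> {z}. f e}" by auto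
  moreover have "measure_pmf.prob (Pi_pmf (X \<times> {z}) False (\<lambda>e. bernoulli_pmf (qq e))) {f. \<forall>e\<in>S \<times> {z}. f e}
      = (\<Prod>e\<in>S \<times> {z}. qq e)"
    by (rule rect_prob) (use X S q in auto)
  moreover have "S \<times> {z} = (\<lambda>x. (x, z)) ` S" by auto
  moreover have "(\<Prod>e\<in>(\<lambda>x. (x, z)) ` S. qq e) = (\<Prod>x\<in>S. qq (x, z))"
    by (subst prod.reindex) (auto simp: inj_on_def)
  ultimately show ?thesis by simp
qed

locale pairsetup =
  fixes X Z :: "nat set" and qq :: "nat \<times> nat \<Rightarrow> real" and u v w :: nat
  assumes X: "finite X" and Z: "finite Z"
    and q01: "\<And>e. e \<in> X \<times> Z \<Longrightarrow> 0 \<le> qq e \<and> qq e \<le> 1"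
    and uX: "u \<in> X" and vX: "v \<in> X" and wX: "w \<in> X"
    and uv: "u \<noteq> v" and uw: "u \<noteq> w" and vw: "v \<noteq> w"
begin

definition G where "G = Pi_pmf (X \<times> Z) False (\<lambda>e. bernoulli_pmf (qq e))"
definition Gz where "Gz z = Pi_pmf (X \<times> {z}) False (\<lambda>e. bernoulli_pmf (qq e))"

definition a where "a z = qq (u, z) * qq (v, z)"
definition b where "b z = qq (u, z) * qq (w, z)"
definition c where "c z = qq (u, z) * qq (v, z) * qq (w, z)"
definition d where "d z = qq (v, z) * qq (w, z)"

lemma colprob:
  assumes "z \<in> Z" "S \<subseteq> X"
  shows "measure_pmf.prob (Gz z) {f. \<forall>x\<in>S. f (x, z)} = (\<Prod>x\<in>S. qq (x, z))"
  unfolding Gz_def by (rule col_rect) (use assms X q01 in auto)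

lemma col_indep':
  "measure_pmf.prob G {f. \<forall>z\<in>Z. P z (\<lambda>x. x \<in> X \<and> f (x, z))} = (\<Prod>z\<in>Z. measure_pmf.prob (Gz z) {f. P z (\<lambda>x. x \<in> X \<and> f (x, z))})"
  unfolding G_def Gz_def by (rule col_indep[OF X Z])

lemma prob_notY_uv:
  "measure_pmf.prob G {f. \<forall>z\<in>Z. \<not> (f (u, z) \<and> f (v, z))} = (\<Prod>z\<in>Z. 1 - a z)"
proof -
  have "measure_pmf.prob G {f. \<forall>z\<in>Z. \<not> (f (u, z) \<and> f (v, z))}
     = measure_pmf.prob G {f. \<forall>z\<in>Z. (\<lambda>z g. \<not> (g u \<and> g v)) z (\<lambda>x. x \<in> X \<and> f (x, z))}"
    using uX vX by simp
  also have "\<dots> = (\<Prod>z\<in>Z. measure_pmf.prob (Gz z) {f. \<not> (f (u, z) \<and> f (v, z))})"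
    by (subst col_indep') (use uX vX in simp)
  also have "\<dots> = (\<Prod>z\<in>Z. 1 - a z)"
  proof (intro prod.cong refl)
    fix z assume z: "z \<in> Z"
    have "measure_pmf.prob (Gz z) {f. \<not> (f (u, z) \<and> f (v, z))} = 1 - measure_pmf.prob (Gz z) {f. \<forall>x\<in>{u,v}. f (x, z)}"
      by (subst pmf_prob_compl) simp
    also have "\<dots> = 1 - a z" using z uX vX uv by (subst colprob) (auto simp: a_def)
    finally show "measure_pmf.prob (Gz z) {f. \<not> (f (u, z) \<and> f (v, z))} = 1 - a z" .
  qed
  finally show ?thesis .
qed

lemma prob_notY:
  assumes x: "x \<in> X" and y: "y \<in> X" and xy: "x \<noteq> y"
  shows "measure_pmf.prob G {f. \<forall>z\<in>Z. \<not> (f (x, z) \<and> f (y, z))} = (\<Prod>z\<in>Z. 1 - qq (x, z) * qq (y, z))"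
proof -
  have "measure_pmf.prob G {f. \<forall>z\<in>Z. \<not> (f (x, z) \<and> f (y, z))}
     = measure_pmf.prob G {f. \<forall>z\<in>Z. (\<lambda>z g. \<not> (g x \<and> g y)) z (\<lambda>x. x \<in> X \<and> f (x, z))}"
    using x y by simp
  also have "\<dots> = (\<Prod>z\<in>Z. measure_pmf.prob (Gz z) {f. \<not> (f (x, z) \<and> f (y, z))})"
    by (subst col_indep') (use x y in simp)
  also have "\<dots> = (\<Prod>z\<in>Z. 1 - qq (x, z) * qq (y, z))"
  proof (intro prod.cong refl)
    fix z assume z: "z \<in> Z"
    have "measure_pmf.prob (Gz z) {f. \<not> (f (x, z) \<and> f (y, z))} = 1 - measure_pmf.prob (Gz z) {f. \<forall>x'\<in>{x,y}. f (x', z)}"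
      by (subst pmf_prob_compl) simp
    also have "\<dots> = 1 - qq (x, z) * qq (y, z)" using z x y xy by (subst colprob) auto
    finally show "measure_pmf.prob (Gz z) {f. \<not> (f (x, z) \<and> f (y, z))} = 1 - qq (x, z) * qq (y, z)" .
  qed
  finally show ?thesis .
qed

lemma prob_notT:
  "measure_pmf.prob G {f. \<forall>z\<in>Z. \<not> (f (u, z) \<and> f (v, z) \<and> f (w, z))} = (\<Prod>z\<in>Z. 1 - c z)"
proof -
  have "measure_pmf.prob G {f. \<forall>z\<in>Z. \<not> (f (u, z) \<and> f (v, z) \<and> f (w, z))}
     = measure_pmf.prob G {f. \<forall>z\<in>Z. (\<lambda>z g. \<not> (g u \<and> g v \<and> g w)) z (\<lambda>x. x \<in> X \<and> f (x, z))}"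
    using uX vX wX by simp
  also have "\<dots> = (\<Prod>z\<in>Z. measure_pmf.prob (Gz z) {f. \<not> (f (u, z) \<and> f (v, z) \<and> f (w, z))})"
    by (subst col_indep') (use uX vX wX in simp)
  also have "\<dots> = (\<Prod>z\<in>Z. 1 - c z)"
  proof (intro prod.cong refl)
    fix z assume z: "z \<in> Z"
    have "measure_pmf.prob (Gz z) {f. \<not> (f (u, z) \<and> f (v, z) \<and> f (w, z))} = 1 - measure_pmf.prob (Gz z) {f. \<forall>x'\<in>{u,v,w}. f (x', z)}"
      by (subst pmf_prob_compl) simp
    also have "\<dots> = 1 - c z" using z uX vX wX uv uw vw by (subst colprob) (auto simp: c_def mult_ac)
    finally show "measure_pmf.prob (Gz z) {f. \<not> (f (u, z) \<and> f (v, z) \<and> f (w, z))} = 1 - c z" .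
  qed
  finally show ?thesis .
qed

lemma prob_notY_both:
  "measure_pmf.prob G {f. \<forall>z\<in>Z. \<not> (f (u, z) \<and> f (v, z)) \<and> \<not> (f (u, z) \<and> f (w, z))} = (\<Prod>z\<in>Z. 1 - a z - b z + c z)"
proof -
  have "measure_pmf.prob G {f. \<forall>z\<in>Z. \<not> (f (u, z) \<and> f (v, z)) \<and> \<not> (f (u, z) \<and> f (w, z))}
     = measure_pmf.prob G {f. \<forall>z\<in>Z. (\<lambda>z g. \<not> (g u \<and> g v) \<and> \<not> (g u \<and> g w)) z (\<lambda>x. x \<in> X \<and> f (x, z))}"
    using uX vX wX by simp
  also have "\<dots> = (\<Prod>z\<in>Z. measure_pmf.prob (Gz z) {f. \<not> (f (u, z) \<and> f (v, z)) \<and> \<not> (f (u, z) \<and> f (w, z))})"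
    by (subst col_indep') (use uX vX wX in simp)
  also have "\<dots> = (\<Prod>z\<in>Z. 1 - a z - b z + c z)"
  proof (intro prod.cong refl)
    fix z assume z: "z \<in> Z"
    let ?U1 = "{f. \<forall>x'\<in>{u,v}. f (x', z)}" and ?U2 = "{f. \<forall>x'\<in>{u,w}. f (x', z)}"
    have e: "{f. \<not> (f (u, z) \<and> f (v, z)) \<and> \<not> (f (u, z) \<and> f (w, z))} = - (?U1 \<union> ?U2)" by auto
    have i: "?U1 \<inter> ?U2 = {f. \<forall>x'\<in>{u,v,w}. f (x', z)}" by auto
    have "measure_pmf.prob (Gz z) {f. \<not> (f (u, z) \<and> f (v, z)) \<and> \<not> (f (u, z) \<and> f (w, z))}
       = 1 - (measure_pmf.prob (Gz z) ?U1 + measure_pmf.prob (Gz z) ?U2 - measure_pmf.prob (Gz z) {f. \<forall>x'\<in>{u,v,w}. f (x', z)})"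
      unfolding e pmf_prob_compl_set pmf_prob_union i ..
    also have "\<dots> = 1 - (a z + b z - c z)"
    proof -
      have c1: "measure_pmf.prob (Gz z) ?U1 = a z" using colprob[of z "{u,v}"] z uX vX uv by (simp add: a_def)
      have c2: "measure_pmf.prob (Gz z) ?U2 = b z" using colprob[of z "{u,w}"] z uX wX uw by (simp add: b_def)
      have c3: "measure_pmf.prob (Gz z) {f. \<forall>x'\<in>{u,v,w}. f (x', z)} = c z"
        using colprob[of z "{u,v,w}"] z uX vX wX uv uw vw by (simp add: c_def mult_ac)
      show ?thesis unfolding c1 c2 c3 ..
    qed
    finally show "measure_pmf.prob (Gz z) {f. \<not> (f (u, z) \<and> f (v, z)) \<and> \<not> (f (u, z) \<and> f (w, z))} = 1 - a z - b z + c z" by simp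
  qed
  finally show ?thesis .
qed

definition YY where "YY x y f \<longleftrightarrow> (\<exists>z\<in>Z. f (x, z) \<and> f (y, z))"

lemma prob_B_eq:
  "measure_pmf.prob G {f. YY u v f \<and> YY u w f}
     = 1 - (\<Prod>z\<in>Z. 1 - a z) - (\<Prod>z\<in>Z. 1 - b z) + (\<Prod>z\<in>Z. 1 - a z - b z + c z)"
proof -
  let ?Nv = "{f. \<forall>z\<in>Z. \<not> (f (u, z) \<and> f (v, z))}"
  let ?Nw = "{f. \<forall>z\<in>Z. \<not> (f (u, z) \<and> f (w, z))}"
  have e: "{f. YY u v f \<and> YY u w f} = - (?Nv \<union> ?Nw)" by (auto simp: YY_def)
  have i: "?Nv \<inter> ?Nw = {f. \<forall>z\<in>Z. \<not> (f (u, z) \<and> f (v, z)) \<and> \<not> (f (u, z) \<and> f (w, z))}" by auto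
  have "measure_pmf.prob G {f. YY u v f \<and> YY u w f} = 1 - (measure_pmf.prob G ?Nv + measure_pmf.prob G ?Nw
      - measure_pmf.prob G {f. \<forall>z\<in>Z. \<not> (f (u, z) \<and> f (v, z)) \<and> \<not> (f (u, z) \<and> f (w, z))})"
    unfolding e pmf_prob_compl_set pmf_prob_union i ..
  also have "\<dots> = 1 - ((\<Prod>z\<in>Z. 1 - a z) + (\<Prod>z\<in>Z. 1 - b z) - (\<Prod>z\<in>Z. 1 - a z - b z + c z))"
    unfolding prob_notY_both prob_notY[OF uX vX uv] prob_notY[OF uX wX uw] a_def b_def ..
  finally show ?thesis by simp
qed


definition "alph = sum a Z"
definition "bet = sum b Z"
definition "gam = sum c Z"
definition "sgm = (\<Sum>z\<in>Z. a z * b z)"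
definition "dd = sum d Z"

lemma q_bounds: "x \<in> X \<Longrightarrow> z \<in> Z \<Longrightarrow> 0 \<le> qq (x, z) \<and> qq (x, z) \<le> 1"
  using q01 by auto

lemma abc_bounds:
  assumes z: "z \<in> Z"
  shows "0 \<le> a z" "a z \<le> 1" "0 \<le> b z" "b z \<le> 1" "0 \<le> c z" "c z \<le> a z" "a z * b z \<le> c z"
    "0 \<le> d z" "d z \<le> 1"
proof -
  have qu: "0 \<le> qq (u,z)" "qq (u,z) \<le> 1" using q_bounds[OF uX z] by auto
  have qv: "0 \<le> qq (v,z)" "qq (v,z) \<le> 1" using q_bounds[OF vX z] by auto
  have qw: "0 \<le> qq (w,z)" "qq (w,z) \<le> 1" using q_bounds[OF wX z] by auto
  show "0 \<le> a z" "0 \<le> b z" "0 \<le> c z" "0 \<le> d z" using qu qv qw by (auto simp: a_def b_def c_def d_def)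
  show "a z \<le> 1" using qu qv unfolding a_def by (meson mult_le_one)
  show "b z \<le> 1" using qu qw unfolding b_def by (meson mult_le_one)
  show "d z \<le> 1" using qv qw unfolding d_def by (meson mult_le_one)
  show "c z \<le> a z" using qu qv qw unfolding a_def c_def by (simp add: mult_left_le)
  have "a z * b z = (qq (u,z) * qq (v,z) * qq (w,z)) * qq (u,z)" by (simp add: a_def b_def mult_ac)
  also have "\<dots> \<le> (qq (u,z) * qq (v,z) * qq (w,z)) * 1" using qu qv qw by (intro mult_left_mono) auto
  finally show "a z * b z \<le> c z" by (simp add: c_def)
qed

lemma sums_nonneg: "0 \<le> alph" "0 \<le> bet" "0 \<le> gam" "0 \<le> dd" "sgm \<le> gam"
  using abc_bounds by (auto simp: alph_def bet_def gam_def dd_def sgm_def intro!: sum_nonneg sum_mono)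

lemma one_minus_prod_le: fixes y :: "nat \<Rightarrow> real" shows "(\<And>z. z \<in> Z \<Longrightarrow> 0 \<le> y z \<and> y z \<le> 1) \<Longrightarrow> 1 - (\<Prod>z\<in>Z. 1 - y z) \<le> sum y Z"
  using prod_ge_1_minus_sum[OF Z] by (simp add: algebra_simps)

lemma one_minus_prod_ge: fixes y :: "nat \<Rightarrow> real" shows "(\<And>z. z \<in> Z \<Longrightarrow> 0 \<le> y z \<and> y z \<le> 1) \<Longrightarrow> sum y Z - (sum y Z)^2/2 \<le> 1 - (\<Prod>z\<in>Z. 1 - y z)"
  using prod_le_bonf2[OF Z] by (simp add: algebra_simps)

lemma prod_le1: fixes y :: "nat \<Rightarrow> real" shows "(\<And>z. z \<in> Z \<Longrightarrow> 0 \<le> y z \<and> y z \<le> 1) \<Longrightarrow> 0 \<le> (\<Prod>z\<in>Z. 1 - y z) \<and> (\<Prod>z\<in>Z. 1 - y z) \<le> 1"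
  by (auto intro!: prod_nonneg prod_le_1)

lemma PB_decomp:
  "measure_pmf.prob G {f. YY u v f \<and> YY u w f}
     = (1 - (\<Prod>z\<in>Z. 1 - a z)) * (1 - (\<Prod>z\<in>Z. 1 - b z))
       + ((\<Prod>z\<in>Z. 1 - a z - b z + c z) - (\<Prod>z\<in>Z. (1 - a z) * (1 - b z)))"
  unfolding prob_B_eq prod.distrib by (simp add: algebra_simps)

lemma xy_conds: "z \<in> Z \<Longrightarrow> 0 \<le> (1 - a z) * (1 - b z) \<and> (1 - a z) * (1 - b z) \<le> 1 - a z - b z + c z \<and> 1 - a z - b z + c z \<le> 1"
proof -
  assume z: "z \<in> Z"
  have "0 \<le> (1 - a z) * (1 - b z)" using abc_bounds[OF z] by (intro mult_nonneg_nonneg) auto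
  thus ?thesis using abc_bounds[OF z] by (auto simp: algebra_simps)
qed

lemma PB_upper: "measure_pmf.prob G {f. YY u v f \<and> YY u w f} \<le> alph * bet + gam"
proof -
  have A: "0 \<le> 1 - (\<Prod>z\<in>Z. 1 - a z)" "1 - (\<Prod>z\<in>Z. 1 - a z) \<le> alph"
    using prod_le1[of a] one_minus_prod_le[of a] abc_bounds by (auto simp: alph_def)
  have B: "0 \<le> 1 - (\<Prod>z\<in>Z. 1 - b z)" "1 - (\<Prod>z\<in>Z. 1 - b z) \<le> bet"
    using prod_le1[of b] one_minus_prod_le[of b] abc_bounds by (auto simp: bet_def)
  have "(\<Prod>z\<in>Z. 1 - a z - b z + c z) - (\<Prod>z\<in>Z. (1 - a z) * (1 - b z))
      \<le> (\<Sum>z\<in>Z. (1 - a z - b z + c z) - (1 - a z) * (1 - b z))"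
    by (rule prod_diff_le[OF Z]) (use xy_conds in auto)
  also have "\<dots> = gam - sgm" by (simp add: gam_def sgm_def algebra_simps sum_subtractf)
  finally have C: "(\<Prod>z\<in>Z. 1 - a z - b z + c z) - (\<Prod>z\<in>Z. (1 - a z) * (1 - b z)) \<le> gam - sgm" .
  have "(1 - (\<Prod>z\<in>Z. 1 - a z)) * (1 - (\<Prod>z\<in>Z. 1 - b z)) \<le> alph * bet"
    using A B by (intro mult_mono) auto
  note AB = this
  have "0 \<le> sgm" unfolding sgm_def using abc_bounds by (intro sum_nonneg mult_nonneg_nonneg) auto
  then show ?thesis unfolding PB_decomp using AB C by linarith
qed

lemma PB_lower:
  assumes "alph \<le> 1" "bet \<le> 1"
  shows "alph * (1 - alph) * (bet * (1 - bet)) + (gam - sgm) * (1 - alph - bet)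
        \<le> measure_pmf.prob G {f. YY u v f \<and> YY u w f}"
proof -
  have A: "alph * (1 - alph) \<le> 1 - (\<Prod>z\<in>Z. 1 - a z)" "0 \<le> alph * (1 - alph)"
  proof -
    have h: "alph - alph^2/2 \<le> 1 - (\<Prod>z\<in>Z. 1 - a z)" using one_minus_prod_ge[of a] abc_bounds by (auto simp: alph_def)
    have "0 \<le> alph*alph" by simp
    with h show "alph * (1 - alph) \<le> 1 - (\<Prod>z\<in>Z. 1 - a z)" unfolding power2_eq_square right_diff_distrib mult_1_right by linarith
    show "0 \<le> alph * (1 - alph)" using assms sums_nonneg by (intro mult_nonneg_nonneg) auto
  qed
  have B: "bet * (1 - bet) \<le> 1 - (\<Prod>z\<in>Z. 1 - b z)" "0 \<le> bet * (1 - bet)"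
  proof -
    have h: "bet - bet^2/2 \<le> 1 - (\<Prod>z\<in>Z. 1 - b z)" using one_minus_prod_ge[of b] abc_bounds by (auto simp: bet_def)
    have "0 \<le> bet*bet" by simp
    with h show "bet * (1 - bet) \<le> 1 - (\<Prod>z\<in>Z. 1 - b z)" unfolding power2_eq_square right_diff_distrib mult_1_right by linarith
    show "0 \<le> bet * (1 - bet)" using assms sums_nonneg by (intro mult_nonneg_nonneg) auto
  qed
  have P1: "alph * (1 - alph) * (bet * (1 - bet)) \<le> (1 - (\<Prod>z\<in>Z. 1 - a z)) * (1 - (\<Prod>z\<in>Z. 1 - b z))"
    using A B by (intro mult_mono) auto
  let ?Px = "\<Prod>z\<in>Z. (1 - a z) * (1 - b z)"
  let ?D = "\<Prod>z\<in>Z. 1 - a z - b z + c z"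
  have h1: "(\<Sum>z\<in>Z. (1 - a z - b z + c z) - (1 - a z) * (1 - b z)) * ?Px \<le> ?D - ?Px"
    by (rule prod_diff_ge[OF Z]) (use xy_conds in auto)
  have h2: "(\<Sum>z\<in>Z. (1 - a z - b z + c z) - (1 - a z) * (1 - b z)) = gam - sgm"
    by (simp add: gam_def sgm_def algebra_simps sum_subtractf)
  have h3: "1 - alph - bet \<le> ?Px"
  proof -
    have pa: "1 - alph \<le> (\<Prod>z\<in>Z. 1 - a z)" using prod_ge_1_minus_sum[OF Z, of a] abc_bounds by (auto simp: alph_def)
    have pb: "1 - bet \<le> (\<Prod>z\<in>Z. 1 - b z)" using prod_ge_1_minus_sum[OF Z, of b] abc_bounds by (auto simp: bet_def)
    have "(1 - alph) * (1 - bet) \<le> (\<Prod>z\<in>Z. 1 - a z) * (\<Prod>z\<in>Z. 1 - b z)"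
      using pa pb assms by (intro mult_mono) auto
    moreover have "1 - alph - bet \<le> (1 - alph) * (1 - bet)" using sums_nonneg by (simp add: algebra_simps)
    ultimately show ?thesis by (simp add: prod.distrib)
  qed
  have h4: "0 \<le> gam - sgm" using sums_nonneg by simp
  have h5: "(gam - sgm) * (1 - alph - bet) \<le> (gam - sgm) * ?Px"
    using h3 h4 by (rule mult_left_mono)
  have P2: "(gam - sgm) * (1 - alph - bet) \<le> ?D - ?Px"
    using h1 h5 unfolding h2 by linarith
  show ?thesis unfolding PB_decomp using P1 P2 by linarith
qed


lemma prob_T: "measure_pmf.prob G {f. \<exists>z\<in>Z. f (u, z) \<and> f (v, z) \<and> f (w, z)} = 1 - (\<Prod>z\<in>Z. 1 - c z)"
proof -
  have e: "{f. \<exists>z\<in>Z. f (u, z) \<and> f (v, z) \<and> f (w, z)} = - {f. \<forall>z\<in>Z. \<not> (f (u, z) \<and> f (v, z) \<and> f (w, z))}" by auto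
  show ?thesis unfolding e pmf_prob_compl_set prob_notT ..
qed

definition "AB = {f. YY v w f \<and> YY u v f \<and> YY u w f}"

lemma PAB_lower: "gam - gam^2/2 \<le> measure_pmf.prob G AB"
proof -
  have "gam - gam^2/2 \<le> measure_pmf.prob G {f. \<exists>z\<in>Z. f (u, z) \<and> f (v, z) \<and> f (w, z)}"
    unfolding prob_T gam_def by (rule one_minus_prod_ge) (meson abc_bounds order.trans)
  also have "\<dots> \<le> measure_pmf.prob G AB"
    by (rule measure_pmf.finite_measure_mono) (auto simp: AB_def YY_def)
  finally show ?thesis .
qed

definition "D3 = {t \<in> Z \<times> Z \<times> Z. fst t \<noteq> fst (snd t) \<and> fst t \<noteq> snd (snd t) \<and> fst (snd t) \<noteq> snd (snd t)}"
definition "Gt t = {f. f (u, fst t) \<and> f (v, fst t) \<and> f (u, fst (snd t)) \<and> f (w, fst (snd t)) \<and> f (v, snd (snd t)) \<and> f (w, snd (snd t))}"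

lemma AB_subset: "AB \<subseteq> {f. \<exists>z\<in>Z. f (u, z) \<and> f (v, z) \<and> f (w, z)} \<union> (\<Union>t\<in>D3. Gt t)"
proof
  fix f assume "f \<in> AB"
  then obtain z1 z2 z3 where z: "z1 \<in> Z" "z2 \<in> Z" "z3 \<in> Z" "f (u,z1)" "f (v,z1)" "f (u,z2)" "f (w,z2)" "f (v,z3)" "f (w,z3)"
    by (auto simp: AB_def YY_def)
  show "f \<in> {f. \<exists>z\<in>Z. f (u, z) \<and> f (v, z) \<and> f (w, z)} \<union> (\<Union>t\<in>D3. Gt t)"
  proof (cases "z1 = z2 \<or> z1 = z3 \<or> z2 = z3")
    case True
    then show ?thesis using z by auto
  next
    case False
    then have "(z1, z2, z3) \<in> D3" using z by (auto simp: D3_def)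
    moreover have "f \<in> Gt (z1, z2, z3)" using z by (auto simp: Gt_def)
    ultimately show ?thesis by blast
  qed
qed

lemma prob_Gt: assumes t: "t \<in> D3" shows "measure_pmf.prob G (Gt t) = a (fst t) * b (fst (snd t)) * d (snd (snd t))"
proof -
  obtain z1 z2 z3 where t': "t = (z1, z2, z3)" by (cases t) auto
  have zz: "z1 \<in> Z" "z2 \<in> Z" "z3 \<in> Z" "z1 \<noteq> z2" "z1 \<noteq> z3" "z2 \<noteq> z3" using t by (auto simp: D3_def t')
  let ?S = "{(u,z1),(v,z1),(u,z2),(w,z2),(v,z3),(w,z3)}"
  have "Gt t = {f. \<forall>e\<in>?S. f e}" by (auto simp: Gt_def t')
  also have "measure_pmf.prob G \<dots> = (\<Prod>e\<in>?S. qq e)"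
    unfolding G_def by (rule rect_prob) (use X Z zz uX vX wX q01 in auto)
  also have "\<dots> = a z1 * b z2 * d z3"
    using zz uv uw vw by (simp add: a_def b_def d_def mult_ac)
  finally show ?thesis by (simp add: t')
qed

lemma PAB_upper: "measure_pmf.prob G AB \<le> gam + alph * bet * dd"
proof -
  have "measure_pmf.prob G AB \<le> measure_pmf.prob G ({f. \<exists>z\<in>Z. f (u, z) \<and> f (v, z) \<and> f (w, z)} \<union> (\<Union>t\<in>D3. Gt t))"
    by (rule measure_pmf.finite_measure_mono[OF AB_subset]) simp
  also have "\<dots> \<le> measure_pmf.prob G {f. \<exists>z\<in>Z. f (u, z) \<and> f (v, z) \<and> f (w, z)} + measure_pmf.prob G (\<Union>t\<in>D3. Gt t)"
    unfolding pmf_prob_union by (simp add: measure_nonneg)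
  also have "measure_pmf.prob G {f. \<exists>z\<in>Z. f (u, z) \<and> f (v, z) \<and> f (w, z)} \<le> gam"
    unfolding prob_T gam_def by (rule one_minus_prod_le) (meson abc_bounds order.trans)
  also have "measure_pmf.prob G (\<Union>t\<in>D3. Gt t) \<le> (\<Sum>t\<in>D3. measure_pmf.prob G (Gt t))"
    by (rule measure_pmf.finite_measure_subadditive_finite) (auto simp: D3_def Z)
  also have "\<dots> = (\<Sum>t\<in>D3. a (fst t) * b (fst (snd t)) * d (snd (snd t)))"
    by (intro sum.cong refl prob_Gt)
  also have "\<dots> \<le> (\<Sum>t\<in>Z \<times> Z \<times> Z. a (fst t) * b (fst (snd t)) * d (snd (snd t)))"
    by (rule sum_mono2) (use Z abc_bounds in \<open>auto simp: D3_def intro!: mult_nonneg_nonneg\<close>)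
  also have "\<dots> = (\<Sum>z1\<in>Z. \<Sum>z2\<in>Z. \<Sum>z3\<in>Z. a z1 * b z2 * d z3)"
    by (simp add: sum.cartesian_product case_prod_beta)
  also have "\<dots> = (\<Sum>z1\<in>Z. a z1 * (\<Sum>z2\<in>Z. b z2 * (\<Sum>z3\<in>Z. d z3)))"
    by (simp add: sum_distrib_left mult.assoc)
  also have "\<dots> = alph * bet * dd"
    by (simp add: sum_distrib_right mult.assoc alph_def bet_def dd_def)
  finally show ?thesis by simp
qed

end




lemma prob_pair_of_set:
  assumes W: "finite W" "W \<noteq> {}"
  shows "measure_pmf.prob (pair_pmf (pmf_of_set W) H) S = (\<Sum>x\<in>W. measure_pmf.prob H {E. (x, E) \<in> S}) / card W"
proof -
  let ?M = "pair_pmf (pmf_of_set W) H"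
  have "measure_pmf.prob ?M S = measure_pmf.prob ?M (S \<inter> set_pmf ?M)" by (rule measure_Int_set_pmf[symmetric])
  also have "S \<inter> set_pmf ?M = (S \<inter> (W \<times> UNIV)) \<inter> set_pmf ?M" using W by auto
  also have "measure_pmf.prob ?M \<dots> = measure_pmf.prob ?M (S \<inter> (W \<times> UNIV))" by (rule measure_Int_set_pmf)
  also have "S \<inter> (W \<times> UNIV) = (\<Union>x\<in>W. {x} \<times> {E. (x, E) \<in> S})" by auto
  also have "measure_pmf.prob ?M \<dots> = (\<Sum>x\<in>W. measure_pmf.prob ?M ({x} \<times> {E. (x, E) \<in> S}))"
    by (rule measure_pmf.finite_measure_finite_Union) (use W in \<open>auto simp: disjoint_family_on_def\<close>)
  also have "\<dots> = (\<Sum>x\<in>W. measure_pmf.prob H {E. (x, E) \<in> S} / card W)"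
  proof (intro sum.cong refl)
    fix x assume x: "x \<in> W"
    have "measure_pmf.prob ?M ({x} \<times> {E. (x, E) \<in> S}) = measure_pmf.prob (pmf_of_set W) {x} * measure_pmf.prob H {E. (x, E) \<in> S}"
      by (rule prob_pair_times)
    also have "measure_pmf.prob (pmf_of_set W) {x} = 1 / card W" using W x by (simp add: measure_pmf_of_set)
    finally show "measure_pmf.prob ?M ({x} \<times> {E. (x, E) \<in> S}) = measure_pmf.prob H {E. (x, E) \<in> S} / card W" by simp
  qed
  also have "\<dots> = (\<Sum>x\<in>W. measure_pmf.prob H {E. (x, E) \<in> S}) / card W" by (simp add: sum_divide_distrib)
  finally show ?thesis .
qed

definition G0 :: "nat \<Rightarrow> nat \<Rightarrow> (nat \<Rightarrow> real) \<Rightarrow> (nat \<Rightarrow> real) \<Rightarrow> ((nat \<times> nat) \<Rightarrow> bool) pmf" where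
  "G0 nL nR wL wR = Pi_pmf ({..<nL} \<times> {..<nR}) False (\<lambda>e. bernoulli_pmf (case_prod (edge_prob nR wL wR) e))"

lemma bip_graph_G0: "bip_graph nL nR wL wR = map_pmf (\<lambda>f. {e. f e}) (G0 nL nR wL wR)"
  unfolding bip_graph_def G0_def by (simp add: case_prod_unfold)

definition PB :: "nat \<Rightarrow> nat \<Rightarrow> (nat \<Rightarrow> real) \<Rightarrow> (nat \<Rightarrow> real) \<Rightarrow> nat \<Rightarrow> nat \<Rightarrow> nat \<Rightarrow> real" where
  "PB nL nR wL wR u v w = measure_pmf.prob (G0 nL nR wL wR)
     {f. (\<exists>z<nR. f (u, z) \<and> f (v, z)) \<and> (\<exists>z<nR. f (u, z) \<and> f (w, z))}"

definition PAB :: "nat \<Rightarrow> nat \<Rightarrow> (nat \<Rightarrow> real) \<Rightarrow> (nat \<Rightarrow> real) \<Rightarrow> nat \<Rightarrow> nat \<Rightarrow> nat \<Rightarrow> real" where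
  "PAB nL nR wL wR u v w = measure_pmf.prob (G0 nL nR wL wR)
     {f. (\<exists>z<nR. f (v, z) \<and> f (w, z)) \<and> (\<exists>z<nR. f (u, z) \<and> f (v, z)) \<and> (\<exists>z<nR. f (u, z) \<and> f (w, z))}"

lemma clust_eq:
  assumes W: "wedges nL u \<noteq> {}"
  shows "clust nL nR wL wR u = (\<Sum>(v,w)\<in>wedges nL u. PAB nL nR wL wR u v w) / (\<Sum>(v,w)\<in>wedges nL u. PB nL nR wL wR u v w)"
proof -
  have fin: "finite (wedges nL u)" unfolding wedges_def
    by (rule finite_subset[of _ "{..<nL} \<times> {..<nL}"]) auto
  define B where "B = {((v, w), Eb). proj_edge nR Eb u v \<and> proj_edge nR Eb u w}"
  define A where "A = {((v, w), Eb). proj_edge nR Eb v w}"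
  have cB: "card (wedges nL u) > 0" using fin W by (simp add: card_gt_0_iff)
  have PBx: "measure_pmf.prob (bip_graph nL nR wL wR) {E. (x, E) \<in> B} = (case x of (v, w) \<Rightarrow> PB nL nR wL wR u v w)"
    if x: "x \<in> wedges nL u" for x
  proof -
    obtain v w where xx: "x = (v, w)" by (cases x)
    have "u \<noteq> v" "u \<noteq> w" using x by (auto simp: xx wedges_def)
    then show ?thesis unfolding bip_graph_G0 PB_def xx B_def
      by (simp add: proj_edge_def vimage_def)
  qed
  have PABx: "measure_pmf.prob (bip_graph nL nR wL wR) {E. (x, E) \<in> A \<inter> B} = (case x of (v, w) \<Rightarrow> PAB nL nR wL wR u v w)"
    if x: "x \<in> wedges nL u" for x
  proof -
    obtain v w where xx: "x = (v, w)" by (cases x)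
    have "u \<noteq> v" "u \<noteq> w" "v \<noteq> w" using x by (auto simp: xx wedges_def)
    then show ?thesis unfolding bip_graph_G0 PAB_def xx B_def A_def
      by (simp add: proj_edge_def vimage_def)
  qed
  have "clust nL nR wL wR u = measure_pmf.prob (wedge_graph nL nR wL wR u) (A \<inter> B) / measure_pmf.prob (wedge_graph nL nR wL wR u) B"
    unfolding clust_def Let_def A_def B_def ..
  also have "\<dots> = ((\<Sum>x\<in>wedges nL u. measure_pmf.prob (bip_graph nL nR wL wR) {E. (x, E) \<in> A \<inter> B}) / card (wedges nL u))
       / ((\<Sum>x\<in>wedges nL u. measure_pmf.prob (bip_graph nL nR wL wR) {E. (x, E) \<in> B}) / card (wedges nL u))"
    unfolding wedge_graph_def by (simp only: prob_pair_of_set[OF fin W])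
  also have "\<dots> = (\<Sum>x\<in>wedges nL u. measure_pmf.prob (bip_graph nL nR wL wR) {E. (x, E) \<in> A \<inter> B})
       / (\<Sum>x\<in>wedges nL u. measure_pmf.prob (bip_graph nL nR wL wR) {E. (x, E) \<in> B})"
    using cB by (simp add: divide_simps)
  also have "\<dots> = (\<Sum>(v,w)\<in>wedges nL u. PAB nL nR wL wR u v w) / (\<Sum>(v,w)\<in>wedges nL u. PB nL nR wL wR u v w)"
    using PBx PABx by (simp cong: sum.cong)
  finally show ?thesis .
qed




lemma final_alg:
  fixes \<Omega> g h h' e r X Y :: real
  assumes O: "\<Omega> > 0" and g: "g > 0" and h: "h \<ge> 0" and h': "h' \<ge> 0" and e: "e \<ge> 0" and r: "r \<ge> 0"
    and small: "2 * e + r \<le> 1/2" and hr: "h' \<le> r * g"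
    and X1: "\<Omega> * (g * (1 - e)) \<le> X" and X2: "X \<le> \<Omega> * (g + h * e)"
    and Y1: "\<Omega> * ((1 - 2 * e) * (g + h) - h') \<le> Y" and Y2: "Y \<le> \<Omega> * (g + h)"
  shows "\<bar>X / Y - g / (g + h)\<bar> \<le> 9 * e + 4 * r"
proof -
  define s where "s = g + h"
  define \<tau> where "\<tau> = g / s"
  define \<rho> where "\<rho> = 2 * e + r"
  have s: "s > 0" using g h by (simp add: s_def)
  have tau: "0 \<le> \<tau>" "\<tau> \<le> 1" using g h s by (auto simp: \<tau>_def s_def divide_simps)
  have "r * g \<le> r * s" using r h by (intro mult_left_mono) (auto simp: s_def)
  hence hs: "h' \<le> r * s" using hr by linarith
  have "s * (1 - \<rho>) \<le> (1 - 2 * e) * s - h'" using hs unfolding \<rho>_def by (simp add: algebra_simps)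
  hence "\<Omega> * (s * (1 - \<rho>)) \<le> \<Omega> * ((1 - 2 * e) * s - h')" using O by (intro mult_left_mono) auto
  hence Y1': "\<Omega> * s * (1 - \<rho>) \<le> Y" using Y1 unfolding s_def by (simp add: mult.assoc)
  have rho: "0 \<le> \<rho>" "\<rho> \<le> 1/2" using e r small by (auto simp: \<rho>_def)
  have Ypos: "Y > 0"
    by (rule less_le_trans[OF _ Y1']) (use O s rho in auto)
  have Xnn: "X \<ge> 0"
    by (rule order.trans[OF _ X1]) (use O g e small r in \<open>auto intro!: mult_nonneg_nonneg\<close>)
  have lo: "\<tau> * (1 - e) \<le> X / Y"
  proof -
    have "\<tau> * (1 - e) = \<Omega> * (g * (1 - e)) / (\<Omega> * s)" using O s by (simp add: \<tau>_def)
    also have "\<dots> \<le> X / (\<Omega> * s)" using X1 O s by (intro divide_right_mono) auto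
    also have "\<dots> \<le> X / Y" using Xnn Ypos Y2 unfolding s_def by (intro divide_left_mono) auto
    finally show ?thesis .
  qed
  have up: "X / Y \<le> (\<tau> + e) / (1 - \<rho>)"
  proof -
    have pos: "0 < \<Omega> * s * (1 - \<rho>)" using O s rho by (intro mult_pos_pos) auto
    have "X / Y \<le> X / (\<Omega> * s * (1 - \<rho>))"
      using Xnn Y1' pos Ypos by (intro divide_left_mono) auto
    also have "\<dots> \<le> \<Omega> * (g + h * e) / (\<Omega> * s * (1 - \<rho>))"
      using X2 O s rho by (intro divide_right_mono) auto
    also have "\<dots> = ((g + h * e) / s) / (1 - \<rho>)" using O s rho by (simp add: field_simps)
    also have "(g + h * e) / s \<le> \<tau> + e"
    proof -
      have "h * e \<le> s * e" using g e by (intro mult_right_mono) (auto simp: s_def)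
      thus ?thesis using s by (simp add: \<tau>_def add_divide_distrib divide_le_eq mult.commute)
    qed
    hence "((g + h * e) / s) / (1 - \<rho>) \<le> (\<tau> + e) / (1 - \<rho>)" using rho by (intro divide_right_mono) auto
    finally show ?thesis .
  qed
  have "(\<tau> + e) / (1 - \<rho>) \<le> (\<tau> + e) * (1 + 2 * \<rho>)"
  proof -
    have "0 \<le> \<rho> * (1 - 2 * \<rho>)" using rho by (intro mult_nonneg_nonneg) auto
    hence "1 \<le> (1 + 2 * \<rho>) * (1 - \<rho>)" by (simp add: algebra_simps)
    hence "(\<tau> + e) * 1 \<le> (\<tau> + e) * ((1 + 2 * \<rho>) * (1 - \<rho>))" using tau e by (intro mult_left_mono) auto
    thus ?thesis using rho by (simp add: divide_le_eq mult.assoc)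
  qed
  also have "\<dots> \<le> \<tau> + 9 * e + 4 * r"
  proof -
    have "(\<tau> + e) * \<rho> \<le> (5/4) * \<rho>" using tau e small rho r by (intro mult_right_mono) auto
    moreover have "(\<tau> + e) * (1 + 2 * \<rho>) = (\<tau> + e) + 2 * ((\<tau> + e) * \<rho>)" by (simp add: algebra_simps)
    ultimately show ?thesis using \<rho>_def e r by linarith
  qed
  finally have "X / Y \<le> \<tau> + 9 * e + 4 * r" using up by linarith
  moreover have "\<tau> - e \<le> X / Y"
  proof -
    have "\<tau> * e \<le> 1 * e" using tau e by (intro mult_right_mono) auto
    thus ?thesis using lo by (simp add: algebra_simps)
  qed
  ultimately show ?thesis using e r by (simp add: \<tau>_def s_def abs_le_iff)
qed




context pairsetup begin

lemma gam_le_alph: "gam \<le> alph"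
  unfolding gam_def alph_def using abc_bounds by (intro sum_mono) auto

lemma pair_bounds:
  assumes A: "alph \<le> e" and B: "bet \<le> e" and D: "dd \<le> e" and E: "e \<le> 1/2"
  shows "gam * (1 - e) \<le> measure_pmf.prob G AB"
    and "measure_pmf.prob G AB \<le> gam + alph * bet * e"
    and "measure_pmf.prob G {f. YY u v f \<and> YY u w f} \<le> alph * bet + gam"
    and "(1 - 2 * e) * (alph * bet + gam) - sgm \<le> measure_pmf.prob G {f. YY u v f \<and> YY u w f}"
proof -
  have nn: "0 \<le> alph" "0 \<le> bet" "0 \<le> gam" "0 \<le> dd" "sgm \<le> gam" using sums_nonneg by auto
  have "gam * gam \<le> gam * e" using gam_le_alph A nn by (intro mult_left_mono) auto
  moreover have "0 \<le> gam * e" using nn A by (intro mult_nonneg_nonneg) auto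
  moreover have "gam * (1 - e) = gam - gam * e" "gam^2/2 = gam * gam / 2" by (simp_all add: algebra_simps power2_eq_square)
  ultimately have "gam * (1 - e) \<le> gam - gam^2/2" by linarith
  thus "gam * (1 - e) \<le> measure_pmf.prob G AB" using PAB_lower by linarith
  have "alph * bet * dd \<le> alph * bet * e" using D nn by (intro mult_left_mono) auto
  thus "measure_pmf.prob G AB \<le> gam + alph * bet * e" using PAB_upper by linarith
  show "measure_pmf.prob G {f. YY u v f \<and> YY u w f} \<le> alph * bet + gam" by (rule PB_upper)
  have a1: "alph \<le> 1" "bet \<le> 1" using A B E by auto
  have s0: "0 \<le> sgm" unfolding sgm_def using abc_bounds by (intro sum_nonneg mult_nonneg_nonneg) auto
  have "1 - 2 * e \<le> 1 - alph - bet" using A B by simp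
  also have "\<dots> \<le> (1 - alph) * (1 - bet)" using nn by (simp add: algebra_simps)
  finally have f1: "1 - 2 * e \<le> (1 - alph) * (1 - bet)" .
  have "alph * bet * (1 - 2 * e) \<le> alph * bet * ((1 - alph) * (1 - bet))"
    using f1 nn by (intro mult_left_mono) auto
  moreover have "(gam - sgm) * (1 - 2 * e) \<le> (gam - sgm) * (1 - alph - bet)"
    using nn A B by (intro mult_left_mono) auto
  moreover have "(1 - 2 * e) * sgm \<le> 1 * sgm" using s0 E nn A by (intro mult_right_mono) auto
  moreover have "alph * (1 - alph) * (bet * (1 - bet)) = alph * bet * ((1 - alph) * (1 - bet))" by (simp add: algebra_simps)
  moreover have "(1 - 2 * e) * (alph * bet + gam) - sgm = alph * bet * (1 - 2 * e) + (gam - sgm) * (1 - 2 * e) - (sgm - (1 - 2 * e) * sgm)"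
    by (simp add: algebra_simps)
  ultimately show "(1 - 2 * e) * (alph * bet + gam) - sgm \<le> measure_pmf.prob G {f. YY u v f \<and> YY u w f}"
    using PB_lower[OF a1] by linarith
qed

end


lemma pair_closed:
  fixes nL nR :: nat and wL wR :: "nat \<Rightarrow> real" and u v w :: nat and Wm e :: real
  assumes nR: "0 < nR" and u: "u < nL" and vw: "(v, w) \<in> wedges nL u"
    and wLpos: "\<And>x. x < nL \<Longrightarrow> 0 < wL x" and wRpos: "\<And>z. z < nR \<Longrightarrow> 0 < wR z"
    and assm1: "\<And>x z. x < nL \<Longrightarrow> z < nR \<Longrightarrow> wL x * wR z / (real nR * moment nR wR 1) \<le> 1"
    and Wm: "\<And>x. x < nL \<Longrightarrow> wL x \<le> Wm"
    and e_def: "e = Wm^2 * (\<Sum>z<nR. wR z ^ 2) / (\<Sum>z<nR. wR z ^ 1)^2"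
    and e_small: "e \<le> 1/2"
  defines "g \<equiv> wL u * (\<Sum>z<nR. wR z ^ 3) / (\<Sum>z<nR. wR z ^ 1)^3"
    and "h \<equiv> wL u^2 * (\<Sum>z<nR. wR z ^ 2)^2 / (\<Sum>z<nR. wR z ^ 1)^4"
    and "h' \<equiv> wL u^2 * (\<Sum>z<nR. wR z ^ 4) / (\<Sum>z<nR. wR z ^ 1)^4"
  shows "wL v * wL w * (g * (1 - e)) \<le> PAB nL nR wL wR u v w"
    and "PAB nL nR wL wR u v w \<le> wL v * wL w * (g + h * e)"
    and "wL v * wL w * ((1 - 2 * e) * (g + h) - h') \<le> PB nL nR wL wR u v w"
    and "PB nL nR wL wR u v w \<le> wL v * wL w * (g + h)"
proof -
  define s where "s k = (\<Sum>z<nR. wR z ^ k)" for k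
  have spos: "0 < s k" for k unfolding s_def using nR wRpos by (intro sum_pos) auto
  have v: "v < nL" "v \<noteq> u" and w: "w < nL" "w \<noteq> u" and vw': "v \<noteq> w" using vw by (auto simp: wedges_def)
  have den: "real nR * moment nR wR 1 = s 1" using nR by (simp add: moment_def s_def)
  have ep: "edge_prob nR wL wR x z = wL x * wR z / s 1" if "x < nL" "z < nR" for x z
    using assm1[OF that] unfolding edge_prob_def den by simp
  have ep01: "0 \<le> edge_prob nR wL wR x z \<and> edge_prob nR wL wR x z \<le> 1" if "x < nL" "z < nR" for x z
    using ep[OF that] wLpos[OF that(1)] wRpos[OF that(2)] spos[of 1] assm1[OF that] den by simp
  interpret P: pairsetup "{..<nL}" "{..<nR}" "case_prod (edge_prob nR wL wR)" u v w
    by unfold_locales (use u v w vw' ep01 in auto)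
  have G: "P.G = G0 nL nR wL wR" unfolding P.G_def G0_def ..
  have PAB: "PAB nL nR wL wR u v w = measure_pmf.prob P.G P.AB"
    unfolding PAB_def G by (intro arg_cong[where f="measure_pmf.prob (G0 nL nR wL wR)"]) (auto simp: P.AB_def P.YY_def)
  have PB: "PB nL nR wL wR u v w = measure_pmf.prob P.G {f. P.YY u v f \<and> P.YY u w f}"
    unfolding PB_def G by (intro arg_cong[where f="measure_pmf.prob (G0 nL nR wL wR)"]) (auto simp: P.YY_def)
  define \<omega> where "\<omega> = wL v * wL w"
  have alph: "P.alph = wL u * wL v * s 2 / s 1 ^ 2"
  proof -
    have "P.alph = (\<Sum>z<nR. (wL u * wL v / s 1 ^ 2) * wR z ^ 2)"
      unfolding P.alph_def P.a_def by (intro sum.cong refl) (simp add: ep u v power2_eq_square)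
    also have "\<dots> = wL u * wL v * s 2 / s 1 ^ 2" unfolding sum_distrib_left[symmetric] by (simp add: s_def)
    finally show ?thesis .
  qed
  have bet: "P.bet = wL u * wL w * s 2 / s 1 ^ 2"
  proof -
    have "P.bet = (\<Sum>z<nR. (wL u * wL w / s 1 ^ 2) * wR z ^ 2)"
      unfolding P.bet_def P.b_def by (intro sum.cong refl) (simp add: ep u w power2_eq_square)
    also have "\<dots> = wL u * wL w * s 2 / s 1 ^ 2" unfolding sum_distrib_left[symmetric] by (simp add: s_def)
    finally show ?thesis .
  qed
  have dd: "P.dd = \<omega> * s 2 / s 1 ^ 2"
  proof -
    have "P.dd = (\<Sum>z<nR. (wL v * wL w / s 1 ^ 2) * wR z ^ 2)"
      unfolding P.dd_def P.d_def by (intro sum.cong refl) (simp add: ep v w power2_eq_square)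
    also have "\<dots> = \<omega> * s 2 / s 1 ^ 2" unfolding sum_distrib_left[symmetric] by (simp add: s_def \<omega>_def)
    finally show ?thesis .
  qed
  have gam: "P.gam = \<omega> * g"
  proof -
    have "P.gam = (\<Sum>z<nR. (wL u * wL v * wL w / s 1 ^ 3) * wR z ^ 3)"
      unfolding P.gam_def P.c_def by (intro sum.cong refl) (simp add: ep u v w power3_eq_cube)
    also have "\<dots> = \<omega> * g" unfolding sum_distrib_left[symmetric] by (simp add: s_def \<omega>_def g_def)
    finally show ?thesis .
  qed
  have sgm: "P.sgm = \<omega> * h'"
  proof -
    have "P.sgm = (\<Sum>z<nR. (wL u ^ 2 * wL v * wL w / s 1 ^ 4) * wR z ^ 4)"
      unfolding P.sgm_def P.a_def P.b_def by (intro sum.cong refl) (simp add: ep u v w power2_eq_square power4_eq_xxxx mult_ac)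
    also have "\<dots> = \<omega> * h'" unfolding sum_distrib_left[symmetric] by (simp add: s_def \<omega>_def h'_def)
    finally show ?thesis .
  qed
  have ab: "P.alph * P.bet = \<omega> * h"
    unfolding alph bet \<omega>_def h_def s_def by (simp add: power2_eq_square power4_eq_xxxx mult_ac)
  have Wu: "wL u \<le> Wm" "wL v \<le> Wm" "wL w \<le> Wm" using Wm u v w by auto
  have pos: "0 < wL u" "0 < wL v" "0 < wL w" using wLpos u v w by auto
  have s2s1: "0 \<le> s 2 / s 1 ^ 2" using spos[of 2] spos[of 1] by (intro divide_nonneg_pos) auto
  have ee: "e = Wm * Wm * (s 2 / s 1 ^ 2)" unfolding e_def s_def by (simp add: power2_eq_square)
  have "wL u * wL v \<le> Wm * Wm" using Wu pos by (intro mult_mono) auto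
  hence "wL u * wL v * (s 2 / s 1 ^ 2) \<le> Wm * Wm * (s 2 / s 1 ^ 2)" using s2s1 by (intro mult_right_mono)
  hence A: "P.alph \<le> e" unfolding alph ee by simp
  have "wL u * wL w \<le> Wm * Wm" using Wu pos by (intro mult_mono) auto
  hence "wL u * wL w * (s 2 / s 1 ^ 2) \<le> Wm * Wm * (s 2 / s 1 ^ 2)" using s2s1 by (intro mult_right_mono)
  hence B: "P.bet \<le> e" unfolding bet ee by simp
  have "wL v * wL w \<le> Wm * Wm" using Wu pos by (intro mult_mono) auto
  hence "wL v * wL w * (s 2 / s 1 ^ 2) \<le> Wm * Wm * (s 2 / s 1 ^ 2)" using s2s1 by (intro mult_right_mono)
  hence D: "P.dd \<le> e" unfolding dd ee \<omega>_def by simp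
  note pb = P.pair_bounds[OF A B D e_small]
  show "wL v * wL w * (g * (1 - e)) \<le> PAB nL nR wL wR u v w"
    using pb(1) unfolding PAB gam \<omega>_def by (simp add: mult.assoc)
  show "PAB nL nR wL wR u v w \<le> wL v * wL w * (g + h * e)"
    using pb(2) unfolding PAB gam mult.assoc[symmetric] ab \<omega>_def by (simp add: algebra_simps)
  show "wL v * wL w * ((1 - 2 * e) * (g + h) - h') \<le> PB nL nR wL wR u v w"
    using pb(4) unfolding PB gam ab sgm \<omega>_def by (simp add: algebra_simps)
  show "PB nL nR wL wR u v w \<le> wL v * wL w * (g + h)"
    using pb(3) unfolding PB gam ab \<omega>_def by (simp add: algebra_simps)
qed


lemma target_eq:
  fixes nR :: nat and wR :: "nat \<Rightarrow> real" and x :: real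
  assumes nR: "0 < nR" and wRpos: "\<And>z. z < nR \<Longrightarrow> 0 < wR z" and x: "0 < x"
  shows "1 / (1 + (moment nR wR 2)^2 / (moment nR wR 3 * moment nR wR 1) * x)
       = (x * (\<Sum>z<nR. wR z ^ 3) / (\<Sum>z<nR. wR z ^ 1)^3)
         / (x * (\<Sum>z<nR. wR z ^ 3) / (\<Sum>z<nR. wR z ^ 1)^3 + x^2 * (\<Sum>z<nR. wR z ^ 2)^2 / (\<Sum>z<nR. wR z ^ 1)^4)"
proof -
  define s where "s k = (\<Sum>z<nR. wR z ^ k)" for k
  have spos: "0 < s k" for k unfolding s_def using nR wRpos by (intro sum_pos) auto
  have m: "moment nR wR k = s k / nR" for k by (simp add: moment_def s_def)
  have n: "real nR > 0" using nR by simp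
  have "1 / (1 + (s 2 / nR)^2 / (s 3 / nR * (s 1 / nR)) * x) = s 3 * s 1 / (s 3 * s 1 + s 2 ^ 2 * x)"
    using spos[of 1] spos[of 2] spos[of 3] n x by (simp add: field_simps power2_eq_square)
  also have "\<dots> = (x * s 3 / s 1 ^ 3) / (x * s 3 / s 1 ^ 3 + x^2 * s 2 ^ 2 / s 1 ^ 4)"
  proof -
    define t where "t = x / s 1 ^ 4"
    have t: "t \<noteq> 0" using x spos[of 1] by (simp add: t_def)
    have 1: "x * s 3 / s 1 ^ 3 = t * (s 3 * s 1)" using spos[of 1] by (simp add: t_def field_simps power3_eq_cube power4_eq_xxxx)
    have 2: "x^2 * s 2 ^ 2 / s 1 ^ 4 = t * (s 2 ^ 2 * x)" using spos[of 1] by (simp add: t_def field_simps power2_eq_square)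
    show ?thesis unfolding 1 2 distrib_left[symmetric] using t by (simp add: mult.commute[of "s 3"])
  qed
  finally show ?thesis unfolding m s_def .
qed

lemma N_bound:
  fixes nL nR :: nat and wL wR :: "nat \<Rightarrow> real" and u :: nat and Wm wRm :: real
  assumes nR: "0 < nR" and u: "u < nL" and W: "wedges nL u \<noteq> {}"
    and wLpos: "\<And>x. x < nL \<Longrightarrow> 0 < wL x" and wRpos: "\<And>z. z < nR \<Longrightarrow> 0 < wR z"
    and assm1: "\<And>x z. x < nL \<Longrightarrow> z < nR \<Longrightarrow> wL x * wR z / (real nR * moment nR wR 1) \<le> 1"
    and Wm: "\<And>x. x < nL \<Longrightarrow> wL x \<le> Wm" and wRm: "\<And>z. z < nR \<Longrightarrow> wR z \<le> wRm"
  defines "e \<equiv> Wm^2 * (\<Sum>z<nR. wR z ^ 2) / (\<Sum>z<nR. wR z ^ 1)^2"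
    and "r \<equiv> Wm * wRm / (\<Sum>z<nR. wR z ^ 1)"
  assumes small: "2 * e + r \<le> 1/2"
  shows "\<bar>clust nL nR wL wR u - 1 / (1 + (moment nR wR 2)^2 / (moment nR wR 3 * moment nR wR 1) * wL u)\<bar>
         \<le> 9 * e + 4 * r"
proof -
  define s where "s k = (\<Sum>z<nR. wR z ^ k)" for k
  have spos: "0 < s k" for k unfolding s_def using nR wRpos by (intro sum_pos) auto
  define g where "g = wL u * (\<Sum>z<nR. wR z ^ 3) / (\<Sum>z<nR. wR z ^ 1)^3"
  define h where "h = wL u^2 * (\<Sum>z<nR. wR z ^ 2)^2 / (\<Sum>z<nR. wR z ^ 1)^4"
  define h' where "h' = wL u^2 * (\<Sum>z<nR. wR z ^ 4) / (\<Sum>z<nR. wR z ^ 1)^4"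
  have fin: "finite (wedges nL u)" unfolding wedges_def
    by (rule finite_subset[of _ "{..<nL} \<times> {..<nL}"]) auto
  have wu: "0 < wL u" using wLpos u by auto
  have Wm0: "0 < Wm" using Wm[OF u] wu by simp
  have wRm0: "0 < wRm" using wRm[OF nR] wRpos[OF nR] by simp
  have S: "0 < (\<Sum>z<nR. wR z ^ 1)" "0 < (\<Sum>z<nR. wR z ^ 2)" "0 < (\<Sum>z<nR. wR z ^ 3)" "0 < (\<Sum>z<nR. wR z ^ 4)"
    using spos[of 1] spos[of 2] spos[of 3] spos[of 4] unfolding s_def by auto
  have e0: "0 \<le> e" unfolding e_def using S by (intro divide_nonneg_pos mult_nonneg_nonneg) auto
  have r0: "0 \<le> r" unfolding r_def using S Wm0 wRm0 by (intro divide_nonneg_pos mult_nonneg_nonneg) auto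
  have e_small: "e \<le> 1/2" using small r0 e0 by linarith
  have g0: "0 < g" unfolding g_def using S wu by (intro divide_pos_pos mult_pos_pos) auto
  have h0: "0 \<le> h" unfolding h_def using S by (intro divide_nonneg_pos mult_nonneg_nonneg) auto
  have h'0: "0 \<le> h'" unfolding h'_def using S by (intro divide_nonneg_pos mult_nonneg_nonneg) auto
  have hr: "h' \<le> r * g"
  proof -
    have "s 4 \<le> wRm * s 3" unfolding s_def sum_distrib_left
      by (intro sum_mono) (use wRm wRpos in \<open>auto simp: power3_eq_cube power4_eq_xxxx intro!: mult_right_mono\<close>)
    hence "wL u * s 4 \<le> Wm * (wRm * s 3)" using Wm[OF u] wu spos[of 4] by (intro mult_mono) auto
    hence "wL u * s 4 * (wL u / s 1 ^ 4) \<le> Wm * (wRm * s 3) * (wL u / s 1 ^ 4)"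
      using wu spos[of 1] by (intro mult_right_mono) auto
    thus ?thesis unfolding h'_def r_def g_def s_def[symmetric] using spos[of 1]
      by (simp add: power2_eq_square power3_eq_cube power4_eq_xxxx field_simps)
  qed
  define \<Omega> where "\<Omega> = (\<Sum>(v,w)\<in>wedges nL u. wL v * wL w)"
  have \<Omega>0: "0 < \<Omega>" unfolding \<Omega>_def
    by (rule sum_pos[OF fin W]) (auto simp: wedges_def intro!: mult_pos_pos wLpos)
  have eq: "e = Wm^2 * (\<Sum>z<nR. wR z ^ 2) / (\<Sum>z<nR. wR z ^ 1)^2" by (simp add: e_def)
  note pc = pair_closed[OF nR u _ wLpos wRpos assm1 Wm eq e_small]
  let ?X = "\<Sum>(v,w)\<in>wedges nL u. PAB nL nR wL wR u v w"
  let ?Y = "\<Sum>(v,w)\<in>wedges nL u. PB nL nR wL wR u v w"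
  have X1: "\<Omega> * (g * (1 - e)) \<le> ?X" unfolding \<Omega>_def sum_distrib_right
    by (rule sum_mono) (use pc(1) in \<open>auto simp: g_def\<close>)
  have X2: "?X \<le> \<Omega> * (g + h * e)" unfolding \<Omega>_def sum_distrib_right
    by (rule sum_mono) (use pc(2) in \<open>auto simp: g_def h_def\<close>)
  have Y1: "\<Omega> * ((1 - 2 * e) * (g + h) - h') \<le> ?Y" unfolding \<Omega>_def sum_distrib_right
    by (rule sum_mono) (use pc(3) in \<open>auto simp: g_def h_def h'_def\<close>)
  have Y2: "?Y \<le> \<Omega> * (g + h)" unfolding \<Omega>_def sum_distrib_right
    by (rule sum_mono) (use pc(4) in \<open>auto simp: g_def h_def\<close>)
  have "\<bar>?X / ?Y - g / (g + h)\<bar> \<le> 9 * e + 4 * r"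
    by (rule final_alg[OF \<Omega>0 g0 h0 h'0 e0 r0 small hr X1 X2 Y1 Y2])
  moreover have "clust nL nR wL wR u = ?X / ?Y" by (rule clust_eq[OF W])
  moreover have "1 / (1 + (moment nR wR 2)^2 / (moment nR wR 3 * moment nR wR 1) * wL u) = g / (g + h)"
    unfolding g_def h_def by (rule target_eq[OF nR wRpos wu])
  ultimately show ?thesis by simp
qed




lemma e_bound:
  fixes n W c1 c2 s1 s2 \<delta> :: real
  assumes n: "n > 0" and W0: "0 \<le> W" and W: "W \<le> c1 * n powr (1/2 - \<delta>)"
    and s1: "s1 > 0" and s2: "0 \<le> s2" and c2: "s2 / n \<le> c2 * (s1 / n)^2"
  shows "W^2 * s2 / s1^2 \<le> c1^2 * c2 * n powr (-2 * \<delta>)"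
proof -
  have "s2 / n * (n / s1^2) \<le> c2 * (s1 / n)^2 * (n / s1^2)"
    using c2 n s1 by (intro mult_right_mono) auto
  moreover have "s2 / n * (n / s1^2) = s2 / s1^2" using n by simp
  moreover have "c2 * (s1 / n)^2 * (n / s1^2) = c2 / n" using n s1 by (simp add: power2_eq_square)
  ultimately have s2': "s2 / s1^2 \<le> c2 / n" by (simp only:)
  have "W^2 \<le> (c1 * n powr (1/2 - \<delta>))^2" using W0 W by (intro power_mono) auto
  also have "\<dots> = c1^2 * (n powr (1/2 - \<delta>) * n powr (1/2 - \<delta>))" by (simp add: power2_eq_square)
  also have "n powr (1/2 - \<delta>) * n powr (1/2 - \<delta>) = n powr (1 - 2 * \<delta>)"
    by (simp add: powr_add[symmetric])
  finally have W2: "W^2 \<le> c1^2 * n powr (1 - 2 * \<delta>)" .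
  have s20: "0 \<le> s2 / s1^2" using s2 s1 by simp
  hence c20: "0 \<le> c2 / n" using s2' by linarith
  have "W^2 * s2 / s1^2 = W^2 * (s2 / s1^2)" by simp
  also have "\<dots> \<le> c1^2 * n powr (1 - 2 * \<delta>) * (c2 / n)"
    using W2 s2' c20 s20 by (intro mult_mono) auto
  also have "\<dots> = c1^2 * c2 * (n powr (1 - 2 * \<delta>) / n)" by simp
  also have "n powr (1 - 2 * \<delta>) / n = n powr (-2 * \<delta>)"
  proof -
    have "n powr (1 - 2 * \<delta>) / n = n powr (1 - 2 * \<delta>) / n powr 1" using n by simp
    also have "\<dots> = n powr ((1 - 2 * \<delta>) - 1)" by (rule powr_diff[symmetric])
    finally show ?thesis by simp
  qed
  finally show ?thesis .
qed




lemma r_le_sqrt_e: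
  fixes nR :: nat and wR :: "nat \<Rightarrow> real" and Wm :: real
  assumes nR: "0 < nR" and wRpos: "\<And>z. z < nR \<Longrightarrow> 0 < wR z" and Wm: "0 \<le> Wm"
  shows "Wm * Max (wR ` {..<nR}) / (\<Sum>z<nR. wR z ^ 1) \<le> sqrt (Wm^2 * (\<Sum>z<nR. wR z ^ 2) / (\<Sum>z<nR. wR z ^ 1)^2)"
proof -
  define S1 where "S1 = (\<Sum>z<nR. wR z ^ 1)"
  define S2 where "S2 = (\<Sum>z<nR. wR z ^ 2)"
  define M where "M = Max (wR ` {..<nR})"
  have S1: "0 < S1" unfolding S1_def using nR wRpos by (intro sum_pos) auto
  have "M \<in> wR ` {..<nR}" unfolding M_def using nR by (intro Max_in) auto
  then obtain z0 where z0: "z0 < nR" "M = wR z0" by auto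
  have M0: "0 \<le> M" using z0 wRpos by (simp add: less_imp_le)
  have "M^2 = wR z0 ^ 2" using z0 by simp
  also have "\<dots> \<le> S2" unfolding S2_def by (rule member_le_sum) (use z0 in auto)
  finally have MS: "M^2 \<le> S2" .
  have "(Wm * M / S1)^2 = Wm^2 * M^2 / S1^2" by (simp add: power_divide power_mult_distrib)
  also have "\<dots> \<le> Wm^2 * S2 / S1^2" using MS S1 by (intro divide_right_mono mult_left_mono) auto
  finally have "sqrt ((Wm * M / S1)^2) \<le> sqrt (Wm^2 * S2 / S1^2)" by (rule real_sqrt_le_mono)
  moreover have "sqrt ((Wm * M / S1)^2) = Wm * M / S1" using Wm M0 S1 by simp
  ultimately show ?thesis unfolding S1_def S2_def M_def by simp
qed

lemma wedges_ne:
  assumes "3 \<le> nL" "u < nL" shows "wedges nL u \<noteq> {}"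
proof -
  have "((u + 1) mod 3, (u + 2) mod 3) \<in> wedges nL u"
    using assms unfolding wedges_def by auto presburger+
  thus ?thesis by auto
qed

theorem mainTheorem10:
  fixes nL nR :: "nat \<Rightarrow> nat"
    and wL wR :: "nat \<Rightarrow> nat \<Rightarrow> real"
    and \<delta> :: real
    and u :: "nat \<Rightarrow> nat"
  assumes nL_lim: "filterlim nL at_top sequentially"
    and nR_lim: "filterlim nR at_top sequentially"
    and wL_pos: "\<And>N x. x < nL N \<Longrightarrow> wL N x > 0"
    and wR_pos: "\<And>N y. y < nR N \<Longrightarrow> wR N y > 0"
    and assm1: "\<And>N x y. x < nL N \<Longrightarrow> y < nR N \<Longrightarrow>
                 wL N x * wR N y / (real (nR N) * moment (nR N) (wR N) 1) \<le> 1"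
    and delta: "\<delta> > 1/10"
    and max_bound: "(\<lambda>N. Max (wL N ` {..<nL N} \<union> wR N ` {..<nR N}))
                      \<in> O(\<lambda>N. real (nR N) powr (1/2 - \<delta>))"
    and min_bound: "(\<lambda>N. Min (wL N ` {..<nL N})) \<in> \<Omega>(\<lambda>N. 1)"
    and MR2: "(\<lambda>N. moment (nR N) (wR N) 2) \<in> O(\<lambda>N. (moment (nR N) (wR N) 1)^2)"
    and MR4: "(\<lambda>N. moment (nR N) (wR N) 4) \<in> O(\<lambda>N. real (nR N) powr (1 - 2*\<delta>))"
    and u_in: "\<And>N. u N < nL N"
  shows "(\<lambda>N. clust (nL N) (nR N) (wL N) (wR N) (u N)
            - 1 / (1 + (moment (nR N) (wR N) 2)^2
                       / (moment (nR N) (wR N) 3 * moment (nR N) (wR N) 1) * wL N (u N)))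
         \<longlonglongrightarrow> 0"
proof -
  have nRr: "filterlim (\<lambda>N. real (nR N)) at_top sequentially"
    by (rule filterlim_compose[OF filterlim_real_sequentially nR_lim])
  obtain c1 where c1: "c1 > 0"
    "eventually (\<lambda>N. norm (Max (wL N ` {..<nL N} \<union> wR N ` {..<nR N})) \<le> c1 * norm (real (nR N) powr (1/2 - \<delta>))) sequentially"
    using max_bound by (elim landau_o.bigE)
  obtain c2 where c2: "c2 > 0"
    "eventually (\<lambda>N. norm (moment (nR N) (wR N) 2) \<le> c2 * norm ((moment (nR N) (wR N) 1)^2)) sequentially"
    using MR2 by (elim landau_o.bigE)
  define Wm where "Wm N = Max (wL N ` {..<nL N} \<union> wR N ` {..<nR N})" for N
  define wRm where "wRm N = Max (wR N ` {..<nR N})" for N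
  define e where "e N = Wm N^2 * (\<Sum>z<nR N. wR N z ^ 2) / (\<Sum>z<nR N. wR N z ^ 1)^2" for N
  define r where "r N = Wm N * wRm N / (\<Sum>z<nR N. wR N z ^ 1)" for N
  have evnR: "eventually (\<lambda>N. 1 \<le> nR N) sequentially" using nR_lim by (simp add: filterlim_at_top)
  have evnL: "eventually (\<lambda>N. 3 \<le> nL N) sequentially" using nL_lim by (simp add: filterlim_at_top)
  have Wm_ge: "wL N x \<le> Wm N" if "x < nL N" for N x
    unfolding Wm_def by (rule Max_ge) (use that in auto)
  have wRm_ge: "wR N z \<le> wRm N" if "z < nR N" for N z
    unfolding wRm_def by (rule Max_ge) (use that in auto)
  have Wm0: "0 \<le> Wm N" for N using Wm_ge[OF u_in, of N] wL_pos[OF u_in, of N] by simp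
  have ebound: "eventually (\<lambda>N. 0 \<le> e N \<and> e N \<le> c1^2 * c2 * real (nR N) powr (-2 * \<delta>)) sequentially"
    using evnR c1(2) c2(2)
  proof eventually_elim
    case (elim N)
    have n: "real (nR N) > 0" using elim(1) by simp
    have S1: "0 < (\<Sum>z<nR N. wR N z ^ 1)" using elim(1) wR_pos by (intro sum_pos) (auto simp: lessThan_empty_iff)
    have S2: "0 \<le> (\<Sum>z<nR N. wR N z ^ 2)" by (intro sum_nonneg) auto
    have W: "Wm N \<le> c1 * real (nR N) powr (1/2 - \<delta>)" using elim(2) Wm0[of N] by (simp add: Wm_def)
    have m: "moment (nR N) (wR N) k = (\<Sum>z<nR N. wR N z ^ k) / real (nR N)" for k
      by (simp add: moment_def)
    have "(\<Sum>z<nR N. wR N z ^ 2) / real (nR N) \<le> c2 * ((\<Sum>z<nR N. wR N z ^ 1) / real (nR N))^2"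
      using elim(3) S2 unfolding m by simp
    from e_bound[OF n Wm0 W S1 S2 this]
    have "e N \<le> c1^2 * c2 * real (nR N) powr (-2 * \<delta>)" unfolding e_def .
    moreover have "0 \<le> e N" unfolding e_def using S1 S2 by (intro divide_nonneg_pos mult_nonneg_nonneg) auto
    ultimately show ?case by simp
  qed
  have lim0: "(\<lambda>N. c1^2 * c2 * real (nR N) powr (-2 * \<delta>)) \<longlonglongrightarrow> 0"
    using tendsto_mult_right_zero[OF tendsto_neg_powr[OF _ nRr]] delta by simp
  have e0: "e \<longlonglongrightarrow> 0"
  proof (rule tendsto_sandwich[OF _ _ tendsto_const lim0])
    show "eventually (\<lambda>N. 0 \<le> e N) sequentially" using ebound by eventually_elim auto
    show "eventually (\<lambda>N. e N \<le> c1^2 * c2 * real (nR N) powr (-2 * \<delta>)) sequentially" using ebound by eventually_elim auto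
  qed
  have sq0: "(\<lambda>N. sqrt (e N)) \<longlonglongrightarrow> 0" using tendsto_real_sqrt[OF e0] by simp
  have blim: "(\<lambda>N. 9 * e N + 4 * sqrt (e N)) \<longlonglongrightarrow> 0"
    using tendsto_add[OF tendsto_mult_right_zero[OF e0] tendsto_mult_right_zero[OF sq0]] by simp
  have evsmall: "eventually (\<lambda>N. e N < 1/36) sequentially"
    using order_tendstoD(2)[OF e0, of "1/36"] by simp
  have main: "eventually (\<lambda>N. norm (clust (nL N) (nR N) (wL N) (wR N) (u N)
            - 1 / (1 + (moment (nR N) (wR N) 2)^2
                       / (moment (nR N) (wR N) 3 * moment (nR N) (wR N) 1) * wL N (u N)))
          \<le> 9 * e N + 4 * sqrt (e N)) sequentially"
    using evnR evnL ebound evsmall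
  proof eventually_elim
    case (elim N)
    have nR0: "0 < nR N" using elim(1) by simp
    have W: "wedges (nL N) (u N) \<noteq> {}" by (rule wedges_ne[OF elim(2) u_in])
    have e0N: "0 \<le> e N" using elim(3) by simp
    have rs: "r N \<le> sqrt (e N)"
      unfolding r_def e_def wRm_def by (rule r_le_sqrt_e[OF nR0 wR_pos Wm0])
    have "sqrt (e N) \<le> sqrt (1/36)" using elim(4) by (intro real_sqrt_le_mono) simp
    also have "sqrt (1/36::real) = 1/6" by (simp add: real_sqrt_divide)
    finally have "2 * e N + r N \<le> 1/2" using rs elim(4) by simp
    hence small: "2 * (Wm N^2 * (\<Sum>z<nR N. wR N z ^ 2) / (\<Sum>z<nR N. wR N z ^ 1)^2)
                + Wm N * wRm N / (\<Sum>z<nR N. wR N z ^ 1) \<le> 1/2" unfolding e_def r_def .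
    have "\<bar>clust (nL N) (nR N) (wL N) (wR N) (u N)
            - 1 / (1 + (moment (nR N) (wR N) 2)^2
                       / (moment (nR N) (wR N) 3 * moment (nR N) (wR N) 1) * wL N (u N))\<bar>
          \<le> 9 * e N + 4 * r N"
      unfolding e_def r_def
      by (rule N_bound[OF nR0 u_in W wL_pos wR_pos assm1 Wm_ge wRm_ge small])
    also have "\<dots> \<le> 9 * e N + 4 * sqrt (e N)" using rs by simp
    finally show ?case by simp
  qed
  show ?thesis by (rule Lim_null_comparison[OF main blim])
qed


end
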